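(* Let $d\ge1$, $\alpha>1$ and $p\in(0,1]$. For every $\zeta>0$ there exist $\theta\in(0,\zeta)$ and $N=N(\theta)\in\mathbb{N}$ such that for every $n>N$, every realization of $\omega_p$, every minimizing path $\pi_n$ for $T_n(\bar\omega_p)$ (with $\bar\omega_p$ built using this $\theta$ and $n$), and every $1\le i\le n$, \[\Delta\pi_n(i)\le n^{\zeta}.\]
   Context: Let $\{\eta(j,x)\}_{(j,x)\in\mathbb{N}\times\mathbb{Z}^d}$ be i.i.d. Bernoulli under $Q$ with $Q(\eta(0,0)=1)=p$. For $p\in(0,1)$ set $s_p=(\log\frac1p)^{1/d}$ and $\omega_p=\sum_{(k,x)\in\mathbb{N}\times\mathbb{Z}^d}(1-\eta(k,x))\delta_{(k,s_px)}$; $\omega_1$ is a Poisson point process on $\mathbb{N}\times\mathbb{R}^d$ with intensity counting measure $\times$ Lebesgue measure. Point measures are identified with their supports. Given $\theta>0$ and $n$, define \[\bar\omega_p=\omega_p+\sum_{(k,x)\in\mathbb{N}\times n^\theta\mathbb{Z}^d}1_{\{\omega_p(\{k\}\times(x+[0,n^\theta)^d))=0\}}\delta_{(k,x)}.\] For a configuration $\omega$, with $|x|_1=\sum_i|x_i|$, $T_n(\omega)=\min\{\sum_{k=1}^n|x_{k-1}-x_k|_1^\alpha:\ x_0=0,\ \{(k,x_k)\}_{k=1}^n\subset\omega\}$, and a minimizing path is a sequence $\pi_n=(\pi_n(1),\dots,\pi_n(n))$ attaining this minimum. With $\pi_n(0)=0$, $\Delta\pi_n(i)=|\pi_n(i)-\pi_n(i-1)|_1$.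 *)

theory Defs
  imports "HOL-Analysis.Analysis"
begin

text \<open>Points of the space-time configuration live in nat \<times> R^d, with R^d = real ^ 'd
  (d = CARD('d) \<ge> 1). Point measures are identified with their supports (sets).\<close>

definition l1norm :: "real ^ 'd \<Rightarrow> real" where
  "l1norm x = (\<Sum>i\<in>UNIV. \<bar>x $ i\<bar>)"

definition s_p :: "real \<Rightarrow> nat \<Rightarrow> real" where
  "s_p p d = (ln (1 / p)) powr (1 / real d)"

text \<open>Support of omega_p for a realization eta of the Bernoulli field (p < 1).\<close>
definition omega_lattice :: "real \<Rightarrow> ((nat \<times> (int ^ 'd)) \<Rightarrow> bool) \<Rightarrow> (nat \<times> (real ^ 'd)) set" where
  "omega_lattice p eta =
     {(k, s_p p CARD('d) *\<^sub>R (\<chi> i. real_of_int (x $ i))) | k x. \<not> eta (k, x)}"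

text \<open>Realizations of a Poisson point process on nat \<times> R^d: locally finite point sets.\<close>
definition locally_finite_config :: "(nat \<times> (real ^ 'd)) set \<Rightarrow> bool" where
  "locally_finite_config \<omega> \<longleftrightarrow> (\<forall>k B. bounded B \<longrightarrow> finite {x \<in> B. (k, x) \<in> \<omega>})"

definition realizations :: "real \<Rightarrow> (nat \<times> (real ^ 'd)) set set" where
  "realizations p =
     (if p < 1 then range (omega_lattice p) else {\<omega>. locally_finite_config \<omega>})"

definition scaled_lattice :: "real \<Rightarrow> (real ^ 'd) set" where
  "scaled_lattice s = {x. \<forall>i. \<exists>z::int. x $ i = s * real_of_int z}"

definition half_open_cube :: "real ^ 'd \<Rightarrow> real \<Rightarrow> (real ^ 'd) set" where
  "half_open_cube x s = {y. \<forall>i. x $ i \<le> y $ i \<and> y $ i < x $ i + s}"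

definition omega_bar :: "real \<Rightarrow> nat \<Rightarrow> (nat \<times> (real ^ 'd)) set \<Rightarrow> (nat \<times> (real ^ 'd)) set" where
  "omega_bar \<theta> n \<omega> = \<omega> \<union>
     {(k, x) | k x. x \<in> scaled_lattice (real n powr \<theta>) \<and>
        \<not> (\<exists>y \<in> half_open_cube x (real n powr \<theta>). (k, y) \<in> \<omega>)}"

definition admissible_path :: "nat \<Rightarrow> (nat \<times> (real ^ 'd)) set \<Rightarrow> (nat \<Rightarrow> real ^ 'd) \<Rightarrow> bool" where
  "admissible_path n \<omega> \<pi> \<longleftrightarrow> \<pi> 0 = 0 \<and> (\<forall>k\<in>{1..n}. (k, \<pi> k) \<in> \<omega>)"

definition path_cost :: "real \<Rightarrow> nat \<Rightarrow> (nat \<Rightarrow> real ^ 'd) \<Rightarrow> real" where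
  "path_cost \<alpha> n \<pi> = (\<Sum>k=1..n. l1norm (\<pi> (k - 1) - \<pi> k) powr \<alpha>)"

definition minimizing_path :: "real \<Rightarrow> nat \<Rightarrow> (nat \<times> (real ^ 'd)) set \<Rightarrow> (nat \<Rightarrow> real ^ 'd) \<Rightarrow> bool" where
  "minimizing_path \<alpha> n \<omega> \<pi> \<longleftrightarrow> admissible_path n \<omega> \<pi> \<and>
     (\<forall>\<pi>'. admissible_path n \<omega> \<pi>' \<longrightarrow> path_cost \<alpha> n \<pi> \<le> path_cost \<alpha> n \<pi>')"

end

theory Submission
  imports Defs
begin


lemma tangent_powr:
  fixes \<alpha> u x :: real
  assumes a: "1 \<le> \<alpha>" and u: "0 < u" and x: "0 \<le> x"
  shows "u powr \<alpha> + \<alpha> * u powr (\<alpha> - 1) * (x - u) \<le> x powr \<alpha>"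
proof (cases "x = 0")
  case True
  have h: "u powr (\<alpha> - 1) * u = u powr \<alpha>" using u by (simp add: powr_diff)
  have "\<alpha> * u powr (\<alpha> - 1) * (x - u) = - (\<alpha> * (u powr (\<alpha> - 1) * u))" using True by simp
  hence "\<alpha> * u powr (\<alpha> - 1) * (x - u) = - (\<alpha> * u powr \<alpha>)" unfolding h .
  moreover have "u powr \<alpha> \<le> \<alpha> * u powr \<alpha>" using a u by simp
  moreover have "x powr \<alpha> = 0" using True by simp
  ultimately show ?thesis by linarith
next
  case False
  hence xp: "x \<in> {0<..}" using x by simp
  have "(\<lambda>z. z powr \<alpha>) x - (\<lambda>z. z powr \<alpha>) u \<ge> (\<alpha> * u powr (\<alpha> - 1)) * (x - u)"
    apply (rule convex_on_imp_above_tangent[OF powr_convex[OF a]])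
    using u xp apply (auto simp: interior_open)
    using has_real_derivative_powr[OF u] by (rule has_field_derivative_at_within)
  thus ?thesis by simp
qed

lemma two_powr_gt:
  fixes \<alpha> :: real assumes "1 < \<alpha>" shows "1 + \<alpha> < 2 powr \<alpha>"
proof -
  have e: "2 powr \<alpha> = 2 * exp ((\<alpha> - 1) * ln 2)" by (simp add: powr_def exp_diff algebra_simps)
  have "exp ((\<alpha> - 1) * ln 2) \<ge> 1 + (\<alpha> - 1) * ln 2" by (rule exp_ge_add_one_self)
  moreover have "(\<alpha> - 1) * ln 2 \<ge> (\<alpha> - 1) * (2/3)" using ln2_ge_two_thirds assms by (intro mult_left_mono) auto
  ultimately have "exp ((\<alpha> - 1) * ln 2) \<ge> 1 + (\<alpha> - 1) * (2/3)" by linarith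
  hence "2 * (1 + (\<alpha> - 1) * (2/3)) \<le> 2 * exp ((\<alpha> - 1) * ln 2)" by (rule mult_left_mono) simp_all
  moreover have "1 + \<alpha> < 2 * (1 + (\<alpha> - 1) * (2/3))" using assms by (simp add: field_simps)
  ultimately show ?thesis unfolding e by (rule order.strict_trans2[rotated])
qed

lemma bregman_powr:
  fixes \<alpha> u v :: real
  assumes a: "1 < \<alpha>" and u: "0 < u" and v: "0 \<le> v" "v \<le> u / 2"
  shows "(1 - (1 + \<alpha>) / 2 powr \<alpha>) * u powr \<alpha> \<le> u powr \<alpha> - v powr \<alpha> - \<alpha> * v powr (\<alpha> - 1) * (u - v)"
proof -
  have h2: "(u/2) powr \<alpha> = u powr \<alpha> / 2 powr \<alpha>" using u by (simp add: powr_divide)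
  have h3: "(u/2) powr (\<alpha> - 1) * (u/2) = (u/2) powr \<alpha>" using u by (simp add: powr_diff)
  have t1: "v powr \<alpha> + \<alpha> * v powr (\<alpha> - 1) * (u/2 - v) \<le> (u/2) powr \<alpha>"
  proof (cases "v = 0")
    case True thus ?thesis using a by simp
  next
    case False thus ?thesis using tangent_powr[of \<alpha> v "u/2"] a u v by simp
  qed
  have t2: "v powr (\<alpha> - 1) \<le> (u/2) powr (\<alpha> - 1)" using v a by (intro powr_mono2) auto
  hence "\<alpha> * v powr (\<alpha> - 1) * (u/2) \<le> \<alpha> * (u/2) powr (\<alpha> - 1) * (u/2)" using a u by (intro mult_right_mono mult_left_mono) auto
  also have "\<dots> = \<alpha> * (u/2) powr \<alpha>" using h3 by simp
  finally have t3: "\<alpha> * v powr (\<alpha> - 1) * (u/2) \<le> \<alpha> * (u/2) powr \<alpha>" .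
  have "u powr \<alpha> - v powr \<alpha> - \<alpha> * v powr (\<alpha> - 1) * (u - v)
      = u powr \<alpha> - (v powr \<alpha> + \<alpha> * v powr (\<alpha> - 1) * (u/2 - v)) - \<alpha> * v powr (\<alpha> - 1) * (u/2)"
    by (simp add: algebra_simps)
  also have "\<dots> \<ge> u powr \<alpha> - (u/2) powr \<alpha> - \<alpha> * (u/2) powr \<alpha>" using t1 t3 by linarith
  finally have "u powr \<alpha> - v powr \<alpha> - \<alpha> * v powr (\<alpha> - 1) * (u - v) \<ge> u powr \<alpha> - (1 + \<alpha>) * (u/2) powr \<alpha>"
    by (simp add: algebra_simps)
  thus ?thesis using h2 by (simp add: algebra_simps)
qed



lemma sum_tangent:
  fixes \<alpha> u :: real and s :: "nat \<Rightarrow> real"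
  assumes a: "1 \<le> \<alpha>" and u: "0 < u" and nn: "\<And>k. 0 \<le> s k"
  shows "real (card A) * u powr \<alpha> + \<alpha> * u powr (\<alpha> - 1) * (sum s A - real (card A) * u)
         \<le> (\<Sum>k\<in>A. s k powr \<alpha>)"
proof (cases "finite A")
  case True
  have "(\<Sum>k\<in>A. u powr \<alpha> + \<alpha> * u powr (\<alpha> - 1) * (s k - u)) \<le> (\<Sum>k\<in>A. s k powr \<alpha>)"
    by (rule sum_mono) (rule tangent_powr[OF a u nn])
  moreover have "(\<Sum>k\<in>A. u powr \<alpha> + \<alpha> * u powr (\<alpha> - 1) * (s k - u))
     = real (card A) * u powr \<alpha> + \<alpha> * u powr (\<alpha> - 1) * (sum s A - real (card A) * u)"
    by (simp add: sum.distrib sum_distrib_left[symmetric] sum_distrib_right[symmetric] sum_subtractf algebra_simps)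
  ultimately show ?thesis by simp
next
  case False thus ?thesis by simp
qed

definition kap :: "real \<Rightarrow> real" where "kap \<alpha> = (1 - (1 + \<alpha>) / 2 powr \<alpha>) / \<alpha>"

lemma kap_pos: "1 < \<alpha> \<Longrightarrow> 0 < kap \<alpha>"
  using two_powr_gt[of \<alpha>] by (simp add: kap_def field_simps)

lemma stage:
  fixes s :: "nat \<Rightarrow> real" and \<alpha> c u :: real and N m :: nat
  defines "P \<equiv> \<lambda>m. sum s {1..m}"
  defines "F \<equiv> \<lambda>m. (\<Sum>k\<in>{1..m}. s k powr \<alpha>)"
  assumes a: "1 < \<alpha>" and c: "0 < c" and nn: "\<And>k. 0 \<le> s k"
    and win: "\<And>m. 1 \<le> m \<Longrightarrow> m \<le> N \<Longrightarrow> F m \<le> real m * (P m / real m + c) powr \<alpha>"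
    and tail: "P N \<le> c * real N"
    and m: "1 \<le> m" "m \<le> N" and ud: "u = P m / real m" and u2: "2 * c \<le> u"
  shows "\<exists>m'. m < m' \<and> m' \<le> N \<and> u / 4 \<le> P m' / real m' \<and> kap \<alpha> * (u / c) * real m \<le> real m'"
proof -
  have up: "0 < u" using u2 c by simp
  have Pm: "P m = u * real m" using ud m by simp
  have mN: "m < N"
  proof (rule ccontr)
    assume "\<not> m < N" hence "m = N" using m by simp
    hence "u * real N \<le> c * real N" using Pm tail by simp
    hence "u \<le> c" using m \<open>m = N\<close> by simp
    thus False using u2 c by simp
  qed
  define S where "S = {m'. m < m' \<and> m' \<le> N \<and> P m' \<le> (u/2) * real m'}"
  have "2 * c * real N \<le> u * real N" using u2 by (intro mult_right_mono) auto
  hence "P N \<le> (u/2) * real N" using tail by linarith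
  hence NS: "N \<in> S" unfolding S_def using mN by auto
  define m' where "m' = (LEAST x. x \<in> S)"
  have m'S: "m' \<in> S" unfolding m'_def using NS by (rule LeastI)
  hence m'1: "m < m'" "m' \<le> N" "P m' \<le> (u/2) * real m'" unfolding S_def by auto
  have Pmono: "P (m' - 1) \<le> P m'"
  proof -
    have "{1..m'-1} \<subseteq> {1..m'}" by auto
    thus ?thesis unfolding P_def by (intro sum_mono2) (auto simp: nn)
  qed
  have prev: "(u/2) * real (m' - 1) \<le> P (m' - 1)"
  proof (cases "m' - 1 = m")
    case True thus ?thesis using Pm up by simp
  next
    case False
    have "m' - 1 < m'" using m'1(1) by simp
    hence "m' - 1 \<notin> S" unfolding m'_def by (rule not_less_Least)
    thus ?thesis using False m'1 unfolding S_def by auto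
  qed
  have m'2: "2 \<le> m'" using m'1 m by simp
  have "u/4 * real m' \<le> (u/2) * real (m' - 1)" using m'2 up by (simp add: of_nat_diff field_simps)
  hence low: "u/4 * real m' \<le> P m'" using prev Pmono by linarith
  define u' where "u' = P m' / real m'"
  have Pm': "P m' = u' * real m'" using m'2 unfolding u'_def by simp
  have u'low: "u/4 \<le> u'" using low m'2 unfolding u'_def by (simp add: field_simps)
  have u'up: "u' \<le> u/2" using m'1(3) m'2 unfolding u'_def by (simp add: field_simps)
  have u'p: "0 < u'" using u'low up by simp
  have F1: "real m * u powr \<alpha> \<le> F m"
    using sum_tangent[of \<alpha> u s "{1..m}"] a up nn Pm unfolding F_def P_def by simp
  have split: "{1..m'} = {1..m} \<union> {m<..m'}" using m'1 by auto
  have Fs: "F m' = F m + (\<Sum>k\<in>{m<..m'}. s k powr \<alpha>)" unfolding F_def split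
    by (rule sum.union_disjoint) auto
  have Ps: "P m' = P m + sum s {m<..m'}" unfolding P_def split
    by (rule sum.union_disjoint) auto
  have F2: "real (m' - m) * u' powr \<alpha> + \<alpha> * u' powr (\<alpha> - 1) * (sum s {m<..m'} - real (m' - m) * u')
         \<le> (\<Sum>k\<in>{m<..m'}. s k powr \<alpha>)"
    using sum_tangent[of \<alpha> u' s "{m<..m'}"] a u'p nn by simp
  have eq2: "sum s {m<..m'} - real (m' - m) * u' = real m * (u' - u)"
    using Ps Pm Pm' m'1 by (simp add: of_nat_diff algebra_simps)
  have F3: "F m' \<le> real m' * (u' + c) powr \<alpha>" using win[of m'] m'1 m'2 Pm' unfolding u'_def by simp
  define A where "A = u powr \<alpha>"
  define B where "B = u' powr \<alpha>"
  define g where "g = \<alpha> * u' powr (\<alpha> - 1)"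
  have key: "real m * (A - B - g * (u - u')) \<le> real m' * ((u' + c) powr \<alpha> - B)"
  proof -
    have "real m * A + (real (m' - m) * B + g * (real m * (u' - u))) \<le> real m' * (u' + c) powr \<alpha>"
      using F1 F2[unfolded eq2] F3 Fs unfolding A_def B_def g_def by linarith
    thus ?thesis using m'1 by (simp add: of_nat_diff algebra_simps)
  qed
  have D: "kap \<alpha> * \<alpha> * A \<le> A - B - g * (u - u')"
    using bregman_powr[OF a up _ u'up] u'p a unfolding kap_def A_def B_def g_def by simp
  have T: "(u' + c) powr \<alpha> - B \<le> \<alpha> * (u' + c) powr (\<alpha> - 1) * c"
    using tangent_powr[of \<alpha> "u' + c" u'] a u'p c unfolding B_def by (simp add: algebra_simps)
  have T2: "(u' + c) powr (\<alpha> - 1) \<le> u powr (\<alpha> - 1)"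
    using u'up u2 u'p c a by (intro powr_mono2) auto
  have Au: "A = u powr (\<alpha> - 1) * u" unfolding A_def using up by (simp add: powr_diff)
  have upos: "0 < u powr (\<alpha> - 1)" using up by simp
  have "real m * (kap \<alpha> * \<alpha> * A) \<le> real m' * (\<alpha> * u powr (\<alpha> - 1) * c)"
  proof -
    have "real m * (kap \<alpha> * \<alpha> * A) \<le> real m * (A - B - g * (u - u'))"
      using D by (intro mult_left_mono) auto
    also have "\<dots> \<le> real m' * ((u' + c) powr \<alpha> - B)" by (rule key)
    also have "\<dots> \<le> real m' * (\<alpha> * (u' + c) powr (\<alpha> - 1) * c)" using T by (intro mult_left_mono) auto
    also have "\<dots> \<le> real m' * (\<alpha> * u powr (\<alpha> - 1) * c)"
      using T2 a c by (intro mult_left_mono mult_right_mono) auto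
    finally show ?thesis .
  qed
  hence "(\<alpha> * u powr (\<alpha> - 1)) * (real m * kap \<alpha> * u) \<le> (\<alpha> * u powr (\<alpha> - 1)) * (real m' * c)"
    unfolding Au by (simp add: algebra_simps)
  hence "real m * kap \<alpha> * u \<le> real m' * c" using a upos by (simp add: mult_le_cancel_left_pos)
  hence "kap \<alpha> * (u / c) * real m \<le> real m'" using c by (simp add: field_simps)
  thus ?thesis using m'1 u'low unfolding u'_def by blast
qed



lemma tail_avg:
  fixes s :: "nat \<Rightarrow> real" and \<alpha> c :: real and N :: nat
  assumes a: "1 < \<alpha>" and c: "0 < c" and nn: "\<And>k. 0 \<le> s k" and N: "1 \<le> N"
    and tF: "(\<Sum>k\<in>{1..N}. s k powr \<alpha>) \<le> real N * c powr \<alpha>"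
  shows "sum s {1..N} \<le> c * real N"
proof (cases "sum s {1..N} \<le> 0")
  case True
  have "0 \<le> c * real N" using c by simp
  thus ?thesis using True by linarith
next
  case False
  define u where "u = sum s {1..N} / real N"
  have up: "0 < u" using False N unfolding u_def by simp
  have Pu: "sum s {1..N} = u * real N" using N unfolding u_def by simp
  have "real N * u powr \<alpha> \<le> (\<Sum>k\<in>{1..N}. s k powr \<alpha>)"
    using sum_tangent[of \<alpha> u s "{1..N}"] a up nn Pu by simp
  hence "real N * u powr \<alpha> \<le> real N * c powr \<alpha>" using tF by linarith
  hence "u powr \<alpha> \<le> c powr \<alpha>" using N by simp
  have "u \<le> c"
  proof (rule ccontr)
    assume "\<not> u \<le> c"
    hence "c powr \<alpha> < u powr \<alpha>" using c a by (intro powr_less_mono2) auto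
    thus False using \<open>u powr \<alpha> \<le> c powr \<alpha>\<close> by simp
  qed
  thus ?thesis using Pu N by (simp add: mult_right_mono)
qed

lemma comb_main:
  fixes s :: "nat \<Rightarrow> real" and \<alpha> c :: real and N K :: nat
  defines "P \<equiv> \<lambda>m. sum s {1..m}"
  defines "F \<equiv> \<lambda>m. (\<Sum>k\<in>{1..m}. s k powr \<alpha>)"
  assumes a: "1 < \<alpha>" and c: "0 < c" and nn: "\<And>k. 0 \<le> s k"
    and win: "\<And>m. 1 \<le> m \<Longrightarrow> m \<le> N \<Longrightarrow> F m \<le> real m * (P m / real m + c) powr \<alpha>"
    and tF: "F N \<le> real N * c powr \<alpha>" and N: "1 \<le> N"
    and big: "2 * c \<le> s 1 / 4 ^ K"
  shows "(kap \<alpha> * (s 1 / c) / 4 ^ K) ^ K \<le> real N"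
proof -
  define G where "G = kap \<alpha> * (s 1 / c) / 4 ^ K"
  have tail: "P N \<le> c * real N" using tail_avg[OF a c nn N] tF unfolding P_def F_def by simp
  have "0 < s 1 / 4 ^ K" using big c by linarith
  hence s1: "0 < s 1" by (simp add: zero_less_divide_iff)
  have Gnn: "0 \<le> G" unfolding G_def using kap_pos[OF a] s1 c by simp
  have "\<forall>t. t \<le> K \<longrightarrow> (\<exists>m. 1 \<le> m \<and> m \<le> N \<and> s 1 / 4 ^ t \<le> P m / real m \<and> G ^ t \<le> real m)"
  proof (intro allI)
    fix t show "t \<le> K \<longrightarrow> (\<exists>m. 1 \<le> m \<and> m \<le> N \<and> s 1 / 4 ^ t \<le> P m / real m \<and> G ^ t \<le> real m)"
    proof (induction t)
      case 0 show ?case using N by (intro impI exI[of _ 1]) (simp add: P_def)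
    next
      case (Suc t)
      show ?case
      proof
        assume tK: "Suc t \<le> K"
        then obtain m where m: "1 \<le> m" "m \<le> N" "s 1 / 4 ^ t \<le> P m / real m" "G ^ t \<le> real m"
          using Suc.IH by auto
        define u where "u = P m / real m"
        have "s 1 / 4 ^ K \<le> s 1 / 4 ^ t" using s1 tK by (intro divide_left_mono) auto
        hence uK: "s 1 / 4 ^ K \<le> u" using m unfolding u_def by linarith
        hence u2: "2 * c \<le> u" using big by linarith
        obtain m' where m': "m < m'" "m' \<le> N" "u / 4 \<le> P m' / real m'" "kap \<alpha> * (u / c) * real m \<le> real m'"
          using stage[of \<alpha> c s N m u] a c nn win tail m u2 unfolding u_def P_def F_def by blast
        have "s 1 / 4 ^ Suc t \<le> u / 4" using m unfolding u_def by (simp add: divide_right_mono)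
        hence A: "s 1 / 4 ^ Suc t \<le> P m' / real m'" using m' by linarith
        have "s 1 / 4 ^ K / c \<le> u / c" using uK c by (intro divide_right_mono) auto
        moreover have "G = kap \<alpha> * (s 1 / 4 ^ K / c)" unfolding G_def by simp
        ultimately have "G \<le> kap \<alpha> * (u / c)" using kap_pos[OF a]
          by (metis less_imp_le mult_left_mono)
        hence "G * G ^ t \<le> kap \<alpha> * (u / c) * G ^ t" using Gnn by (intro mult_right_mono) auto
        hence "G ^ Suc t \<le> kap \<alpha> * (u / c) * G ^ t" by simp
        also have "\<dots> \<le> kap \<alpha> * (u / c) * real m" using m kap_pos[OF a] c u2
          by (intro mult_left_mono) auto
        finally have "G ^ Suc t \<le> real m'" using m' by linarith
        thus "\<exists>m. 1 \<le> m \<and> m \<le> N \<and> s 1 / 4 ^ Suc t \<le> P m / real m \<and> G ^ Suc t \<le> real m"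
          using A m' m by (intro exI[of _ m']) auto
      qed
    qed
  qed
  then obtain m where "m \<le> N" "G ^ K \<le> real m" by auto
  thus ?thesis unfolding G_def by linarith
qed



lemma l1norm_nonneg: "0 \<le> l1norm x"
  unfolding l1norm_def by (simp add: sum_nonneg)

lemma l1norm_triangle: "l1norm (x + y) \<le> l1norm x + l1norm y"
  unfolding l1norm_def by (simp add: sum.distrib[symmetric] sum_mono abs_triangle_ineq)

lemma l1norm_commute: "l1norm (x - y) = l1norm (y - x)"
  unfolding l1norm_def by (simp add: abs_minus_commute)

lemma l1norm_scale: "l1norm (r *\<^sub>R x) = \<bar>r\<bar> * l1norm x"
  unfolding l1norm_def by (simp add: abs_mult sum_distrib_left)

lemma l1norm_zero: "l1norm 0 = 0"
  unfolding l1norm_def by simp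

lemma l1norm_tri3: "l1norm (a - d) \<le> l1norm (a - b) + l1norm (b - c) + l1norm (c - d)"
proof -
  have "a - d = (a - b) + ((b - c) + (c - d))" by simp
  hence "l1norm (a - d) \<le> l1norm (a - b) + l1norm ((b - c) + (c - d))" using l1norm_triangle by metis
  also have "\<dots> \<le> l1norm (a - b) + (l1norm (b - c) + l1norm (c - d))" using l1norm_triangle by (metis add_left_mono)
  finally show ?thesis by simp
qed

lemma cube_close:
  fixes x y z :: "real ^ 'd"
  assumes "y \<in> half_open_cube x L" "z \<in> half_open_cube x L"
  shows "l1norm (z - y) \<le> real CARD('d) * L"
proof -
  have "\<And>i. \<bar>z $ i - y $ i\<bar> \<le> L"
  proof -
    fix i
    have "x $ i \<le> y $ i" "y $ i < x $ i + L" "x $ i \<le> z $ i" "z $ i < x $ i + L"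
      using assms unfolding half_open_cube_def by auto
    thus "\<bar>z $ i - y $ i\<bar> \<le> L" by (simp add: abs_le_iff)
  qed
  hence "(\<Sum>i\<in>UNIV. \<bar>(z - y) $ i\<bar>) \<le> (\<Sum>i\<in>(UNIV::'d set). L)" by (intro sum_mono) simp
  thus ?thesis unfolding l1norm_def by simp
qed

lemma near_point:
  fixes \<omega> :: "(nat \<times> (real ^ 'd)) set" and y :: "real ^ 'd"
  assumes n: "0 < n"
  shows "\<exists>z. (k, z) \<in> omega_bar \<theta> n \<omega> \<and> l1norm (z - y) \<le> real CARD('d) * real n powr \<theta>"
proof -
  define L where "L = real n powr \<theta>"
  have L: "0 < L" unfolding L_def using n by simp
  define x :: "real ^ 'd" where "x = (\<chi> i. L * of_int \<lfloor>y $ i / L\<rfloor>)"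
  have xl: "x \<in> scaled_lattice L" unfolding scaled_lattice_def x_def by auto
  have yc: "y \<in> half_open_cube x L"
    unfolding half_open_cube_def
  proof (intro CollectI allI conjI)
    fix i
    have f1: "of_int \<lfloor>y $ i / L\<rfloor> \<le> y $ i / L" by (rule of_int_floor_le)
    have f2: "y $ i / L < of_int \<lfloor>y $ i / L\<rfloor> + 1" by (rule real_of_int_floor_add_one_gt)
    have "L * of_int \<lfloor>y $ i / L\<rfloor> \<le> L * (y $ i / L)" using f1 L by (intro mult_left_mono) auto
    thus "x $ i \<le> y $ i" unfolding x_def using L by simp
    have "L * (y $ i / L) < L * (of_int \<lfloor>y $ i / L\<rfloor> + 1)" using f2 L by (intro mult_strict_left_mono) auto
    thus "y $ i < x $ i + L" unfolding x_def using L by (simp add: algebra_simps)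
  qed
  show ?thesis
  proof (cases "\<exists>w \<in> half_open_cube x L. (k, w) \<in> \<omega>")
    case True
    then obtain w where w: "w \<in> half_open_cube x L" "(k, w) \<in> \<omega>" by blast
    have "(k, w) \<in> omega_bar \<theta> n \<omega>" using w unfolding omega_bar_def by simp
    moreover have "l1norm (w - y) \<le> real CARD('d) * L" by (rule cube_close[OF yc w(1)])
    ultimately have "(k, w) \<in> omega_bar \<theta> n \<omega> \<and> l1norm (w - y) \<le> real CARD('d) * L" by simp
    thus ?thesis unfolding L_def by (rule exI)
  next
    case False
    hence "(k, x) \<in> omega_bar \<theta> n \<omega>" using xl unfolding omega_bar_def L_def by auto
    moreover have "x \<in> half_open_cube x L" unfolding half_open_cube_def using L by auto
    hence "l1norm (x - y) \<le> real CARD('d) * L" by (rule cube_close[OF yc])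
    ultimately have "(k, x) \<in> omega_bar \<theta> n \<omega> \<and> l1norm (x - y) \<le> real CARD('d) * L" by simp
    thus ?thesis unfolding L_def by (rule exI)
  qed
qed



lemma modify:
  fixes W :: "(nat \<times> (real ^ 'd)) set" and \<pi> y :: "nat \<Rightarrow> real ^ 'd" and \<alpha> D :: real and a b n :: nat
  assumes mp: "minimizing_path \<alpha> n W \<pi>" and \<alpha>: "0 < \<alpha>" and D: "0 \<le> D"
    and near: "\<And>k. \<exists>z. (k, z) \<in> W \<and> l1norm (z - y k) \<le> D"
    and ya: "y a = \<pi> a" and yb: "b \<le> n \<Longrightarrow> y b = \<pi> b" and ab: "a < b"
  shows "(\<Sum>k\<in>{a<..min b n}. l1norm (\<pi> (k - 1) - \<pi> k) powr \<alpha>)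
       \<le> (\<Sum>k\<in>{a<..min b n}. (l1norm (y (k - 1) - y k) + 2 * D) powr \<alpha>)"
proof -
  define zz where "zz k = (SOME z. (k, z) \<in> W \<and> l1norm (z - y k) \<le> D)" for k
  have zz: "(k, zz k) \<in> W \<and> l1norm (zz k - y k) \<le> D" for k
    unfolding zz_def using near[of k] by (rule someI_ex)
  define \<pi>' where "\<pi>' k = (if a < k \<and> k < b then zz k else \<pi> k)" for k
  have adm: "admissible_path n W \<pi>" and opt: "\<And>p. admissible_path n W p \<Longrightarrow> path_cost \<alpha> n \<pi> \<le> path_cost \<alpha> n p"
    using mp unfolding minimizing_path_def by auto
  have adm': "admissible_path n W \<pi>'"
    using adm zz unfolding admissible_path_def \<pi>'_def by auto
  have cost: "path_cost \<alpha> n \<pi> \<le> path_cost \<alpha> n \<pi>'" by (rule opt[OF adm'])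
  have close: "l1norm (\<pi>' k - y k) \<le> D" if "a \<le> k" "k \<le> b" "k \<le> n" for k
  proof (cases "a < k \<and> k < b")
    case True thus ?thesis using zz unfolding \<pi>'_def by simp
  next
    case False
    hence "k = a \<or> k = b" using that by auto
    hence "\<pi>' k = y k" using False ya yb that unfolding \<pi>'_def by auto
    thus ?thesis using D by (simp add: l1norm_zero)
  qed
  define Win where "Win = {a<..min b n}"
  have WinS: "Win \<subseteq> {1..n}" unfolding Win_def by auto
  have rest: "\<pi>' (k - 1) = \<pi> (k - 1) \<and> \<pi>' k = \<pi> k" if "k \<in> {1..n} - Win" for k
  proof -
    have "k \<le> a \<or> b < k" using that unfolding Win_def by auto
    thus ?thesis unfolding \<pi>'_def by auto
  qed
  define f where "f p k = l1norm (p (k - 1) - p k) powr \<alpha>" for p :: "nat \<Rightarrow> real ^ 'd" and k :: nat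
  have pc: "path_cost \<alpha> n p = sum (f p) ({1..n} - Win) + sum (f p) Win" for p
    unfolding path_cost_def f_def using WinS by (simp add: sum.subset_diff)
  have "sum (f \<pi>) ({1..n} - Win) = sum (f \<pi>') ({1..n} - Win)"
  proof (rule sum.cong)
    fix k assume "k \<in> {1..n} - Win"
    from rest[OF this] show "f \<pi> k = f \<pi>' k" unfolding f_def by metis
  qed simp
  hence s1: "sum (f \<pi>) Win \<le> sum (f \<pi>') Win" using cost pc[of \<pi>] pc[of \<pi>'] by linarith
  have s2: "sum (f \<pi>') Win \<le> (\<Sum>k\<in>Win. (l1norm (y (k - 1) - y k) + 2 * D) powr \<alpha>)"
  proof (rule sum_mono)
    fix k assume k: "k \<in> Win"
    hence kk: "a < k" "k \<le> b" "k \<le> n" unfolding Win_def by auto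
    have c1: "l1norm (\<pi>' (k - 1) - y (k - 1)) \<le> D" using kk by (intro close) auto
    have c2: "l1norm (y k - \<pi>' k) \<le> D" using kk close[of k] by (simp add: l1norm_commute)
    have "l1norm (\<pi>' (k - 1) - \<pi>' k) \<le> l1norm (\<pi>' (k - 1) - y (k - 1)) + l1norm (y (k - 1) - y k) + l1norm (y k - \<pi>' k)"
      by (rule l1norm_tri3)
    hence "l1norm (\<pi>' (k - 1) - \<pi>' k) \<le> l1norm (y (k - 1) - y k) + 2 * D" using c1 c2 by linarith
    thus "f \<pi>' k \<le> (l1norm (y (k - 1) - y k) + 2 * D) powr \<alpha>"
      unfolding f_def using \<alpha> by (intro powr_mono2) (auto simp: l1norm_nonneg)
  qed
  show ?thesis using s1 s2 unfolding Win_def f_def by simp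
qed



lemma reidx: "sum g {a<..a+m} = (\<Sum>j\<in>{1..m}. g (a + j))" for g :: "nat \<Rightarrow> real"
  by (rule sum.reindex_bij_witness[of _ "\<lambda>j. a + j" "\<lambda>k. k - a"]) auto

lemma telescope:
  fixes \<pi> :: "nat \<Rightarrow> real ^ 'd"
  shows "l1norm (\<pi> (a + m) - \<pi> a) \<le> (\<Sum>k\<in>{a<..a+m}. l1norm (\<pi> (k - 1) - \<pi> k))"
proof (induction m)
  case 0 thus ?case by (simp add: l1norm_zero)
next
  case (Suc m)
  have e: "{a<..a + Suc m} = insert (a + Suc m) {a<..a+m}" by auto
  have "\<pi> (a + Suc m) - \<pi> a = (\<pi> (a + Suc m) - \<pi> (a + m)) + (\<pi> (a + m) - \<pi> a)" by simp
  hence "l1norm (\<pi> (a + Suc m) - \<pi> a) \<le> l1norm (\<pi> (a + Suc m) - \<pi> (a + m)) + l1norm (\<pi> (a + m) - \<pi> a)"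
    by (metis l1norm_triangle)
  also have "\<dots> = l1norm (\<pi> (a + Suc m - 1) - \<pi> (a + Suc m)) + l1norm (\<pi> (a + m) - \<pi> a)"
    by (simp add: l1norm_commute)
  also have "\<dots> \<le> l1norm (\<pi> (a + Suc m - 1) - \<pi> (a + Suc m)) + (\<Sum>k\<in>{a<..a+m}. l1norm (\<pi> (k - 1) - \<pi> k))"
    using Suc by simp
  also have "\<dots> = (\<Sum>k\<in>{a<..a + Suc m}. l1norm (\<pi> (k - 1) - \<pi> k))" unfolding e by simp
  finally show ?case .
qed

lemma window_ineq:
  fixes \<omega> :: "(nat \<times> (real ^ 'd)) set" and \<pi> :: "nat \<Rightarrow> real ^ 'd"
  assumes mp: "minimizing_path \<alpha> n (omega_bar \<theta> n \<omega>) \<pi>" and \<alpha>: "0 < \<alpha>" and n: "0 < n"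
    and am: "a + m \<le> n" and m: "1 \<le> m"
  shows "(\<Sum>j\<in>{1..m}. l1norm (\<pi> (a + j - 1) - \<pi> (a + j)) powr \<alpha>)
     \<le> real m * ((\<Sum>j\<in>{1..m}. l1norm (\<pi> (a + j - 1) - \<pi> (a + j))) / real m
                   + 2 * (real CARD('d) * real n powr \<theta>)) powr \<alpha>"
proof -
  define D where "D = real CARD('d) * real n powr \<theta>"
  have D: "0 \<le> D" unfolding D_def by simp
  define v where "v = \<pi> (a + m) - \<pi> a"
  define y where "y k = \<pi> a + ((real k - real a) / real m) *\<^sub>R v" for k
  have ya: "y a = \<pi> a" unfolding y_def by simp
  have yb: "y (a + m) = \<pi> (a + m)" unfolding y_def v_def using m by simp
  have near: "\<And>k. \<exists>z. (k, z) \<in> omega_bar \<theta> n \<omega> \<and> l1norm (z - y k) \<le> D"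
    unfolding D_def using near_point[OF n] by blast
  note M = modify[OF mp \<alpha> D near ya, of "a + m"]
  have mn: "min (a + m) n = a + m" using am by simp
  define S where "S = (\<Sum>k\<in>{a<..a+m}. l1norm (\<pi> (k - 1) - \<pi> k))"
  have step: "l1norm (y (k - 1) - y k) \<le> S / real m" if "k \<in> {a<..a+m}" for k
  proof -
    have k1: "real (k - 1) = real k - 1" using that by (simp add: of_nat_diff)
    have e1: "y (k - 1) - y k = ((real (k - 1) - real a) / real m - (real k - real a) / real m) *\<^sub>R v"
      unfolding y_def by (simp only: scaleR_diff_left) simp
    have e2: "(real (k - 1) - real a) / real m - (real k - real a) / real m = - (1 / real m)"
      unfolding k1 diff_divide_distrib[symmetric] by simp
    have "y (k - 1) - y k = (- (1 / real m)) *\<^sub>R v" using e1 e2 by simp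
    hence "l1norm (y (k - 1) - y k) = l1norm v / real m" using m by (simp only: l1norm_scale) simp
    also have "\<dots> \<le> S / real m" unfolding v_def S_def using m by (intro divide_right_mono telescope) auto
    finally show ?thesis .
  qed
  have "(\<Sum>k\<in>{a<..a+m}. l1norm (\<pi> (k - 1) - \<pi> k) powr \<alpha>)
       \<le> (\<Sum>k\<in>{a<..a+m}. (l1norm (y (k - 1) - y k) + 2 * D) powr \<alpha>)"
    using M yb m by (simp add: mn)
  also have "\<dots> \<le> (\<Sum>k\<in>{a<..a+m}. (S / real m + 2 * D) powr \<alpha>)"
    using step \<alpha> by (intro sum_mono powr_mono2) (auto simp: l1norm_nonneg D)
  also have "\<dots> = real m * (S / real m + 2 * D) powr \<alpha>" by simp
  finally show ?thesis unfolding S_def D_def reidx by simp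
qed

lemma tail_ineq:
  fixes \<omega> :: "(nat \<times> (real ^ 'd)) set" and \<pi> :: "nat \<Rightarrow> real ^ 'd"
  assumes mp: "minimizing_path \<alpha> n (omega_bar \<theta> n \<omega>) \<pi>" and \<alpha>: "0 < \<alpha>" and n: "0 < n"
    and a: "a < n"
  shows "(\<Sum>j\<in>{1..n - a}. l1norm (\<pi> (a + j - 1) - \<pi> (a + j)) powr \<alpha>)
     \<le> real (n - a) * (2 * (real CARD('d) * real n powr \<theta>)) powr \<alpha>"
proof -
  define D where "D = real CARD('d) * real n powr \<theta>"
  have D: "0 \<le> D" unfolding D_def by simp
  define y where "y k = \<pi> a" for k :: nat
  have near: "\<And>k. \<exists>z. (k, z) \<in> omega_bar \<theta> n \<omega> \<and> l1norm (z - y k) \<le> D"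
    unfolding D_def using near_point[OF n] by blast
  note M = modify[OF mp \<alpha> D near, of a "n + 1"]
  have "(\<Sum>k\<in>{a<..n}. l1norm (\<pi> (k - 1) - \<pi> k) powr \<alpha>) \<le> (\<Sum>k\<in>{a<..n}. (2 * D) powr \<alpha>)"
    using M a by (simp add: y_def l1norm_zero)
  also have "\<dots> = real (n - a) * (2 * D) powr \<alpha>" by simp
  finally have "(\<Sum>k\<in>{a<..a + (n - a)}. l1norm (\<pi> (k - 1) - \<pi> k) powr \<alpha>) \<le> real (n - a) * (2 * D) powr \<alpha>"
    using a by simp
  thus ?thesis unfolding reidx D_def by simp
qed



theorem lemma3:
  fixes \<alpha> p :: real
  assumes "\<alpha> > 1" and "0 < p" and "p \<le> 1"
  shows "\<forall>\<zeta>>0. \<exists>\<theta>. 0 < \<theta> \<and> \<theta> < \<zeta> \<and>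
           (\<exists>N::nat. \<forall>n>N. \<forall>\<omega> \<in> (realizations p :: (nat \<times> (real ^ 'd)) set set).
              \<forall>\<pi>. minimizing_path \<alpha> n (omega_bar \<theta> n \<omega>) \<pi> \<longrightarrow>
                 (\<forall>i\<in>{1..n}. l1norm (\<pi> i - \<pi> (i - 1)) \<le> real n powr \<zeta>))"
proof (intro allI impI)
  fix \<zeta> :: real assume z: "0 < \<zeta>"
  have a: "1 < \<alpha>" using assms by simp
  define \<theta> where "\<theta> = \<zeta> / 2"
  define K where "K = nat \<lceil>4 / \<zeta>\<rceil>"
  define d where "d = real CARD('d)"
  have d: "1 \<le> d" unfolding d_def by simp
  define C0 where "C0 = kap \<alpha> / (2 * d * 4 ^ K)"
  have C0: "0 < C0" unfolding C0_def using kap_pos[OF a] d by simp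
  define R1 where "R1 = (4 * d * 4 ^ K) powr (2 / \<zeta>)"
  define N where "N = nat \<lceil>max R1 ((1 / C0) ^ K)\<rceil>"
  have Kz: "4 \<le> real K * \<zeta>"
  proof -
    have "4 / \<zeta> \<le> real K" unfolding K_def by linarith
    thus ?thesis using z by (simp add: field_simps)
  qed
  have main: "l1norm (\<pi> i - \<pi> (i - 1)) \<le> real n powr \<zeta>"
    if nN: "n > N" and mp: "minimizing_path \<alpha> n (omega_bar \<theta> n \<omega>) \<pi>" and i: "i \<in> {1..n}"
    for n \<omega> i and \<pi> :: "nat \<Rightarrow> real ^ 'd"
  proof (rule ccontr)
    assume "\<not> ?thesis"
    hence big0: "real n powr \<zeta> < l1norm (\<pi> i - \<pi> (i - 1))" by simp
    have nR: "R1 < real n" "(1 / C0) ^ K < real n" using nN unfolding N_def by linarith+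
    have n0: "0 < n" using i by simp
    have n1: "1 \<le> real n" using n0 by simp
    define L where "L = real n powr \<theta>"
    have Lp: "0 < L" unfolding L_def using n0 by simp
    define c where "c = 2 * (d * L)"
    have cp: "0 < c" unfolding c_def using Lp d by simp
    define a where "a = i - 1"
    define M where "M = n - a"
    have M1: "1 \<le> M" unfolding M_def a_def using i by auto
    have aM: "a + M = n" unfolding M_def a_def using i by auto
    define s where "s j = l1norm (\<pi> (a + j - 1) - \<pi> (a + j))" for j
    have s1: "s 1 = l1norm (\<pi> i - \<pi> (i - 1))" unfolding s_def a_def using i
      by (simp add: l1norm_commute)
    have nn: "\<And>j. 0 \<le> s j" unfolding s_def by (rule l1norm_nonneg)
    have win: "\<And>m. 1 \<le> m \<Longrightarrow> m \<le> M \<Longrightarrow>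
        (\<Sum>k\<in>{1..m}. s k powr \<alpha>) \<le> real m * (sum s {1..m} / real m + c) powr \<alpha>"
      unfolding s_def c_def L_def d_def using window_ineq[OF mp _ n0] a aM by auto
    have tF: "(\<Sum>k\<in>{1..M}. s k powr \<alpha>) \<le> real M * c powr \<alpha>"
    proof -
      have an: "a < n" unfolding a_def using i by auto
      have "(\<Sum>j\<in>{1..n - a}. l1norm (\<pi> (a + j - 1) - \<pi> (a + j)) powr \<alpha>)
         \<le> real (n - a) * (2 * (real CARD('d) * real n powr \<theta>)) powr \<alpha>"
        by (rule tail_ineq[OF mp _ n0 an]) (use a in simp)
      thus ?thesis unfolding s_def c_def L_def d_def M_def .
    qed
    have LL: "real n powr \<zeta> = L * L" unfolding L_def \<theta>_def by (simp add: powr_add[symmetric])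
    have "R1 powr (\<zeta> / 2) \<le> L" unfolding L_def \<theta>_def using nR z R1_def
      by (intro powr_mono2) auto
    moreover have "R1 powr (\<zeta> / 2) = 4 * d * 4 ^ K" unfolding R1_def using z d
      by (simp add: powr_powr)
    ultimately have L4: "4 * d * 4 ^ K \<le> L" by simp
    have "2 * c * 4 ^ K = (4 * d * 4 ^ K) * L" unfolding c_def by simp
    also have "\<dots> \<le> L * L" using L4 Lp by (intro mult_right_mono) auto
    finally have "2 * c * 4 ^ K < s 1" using big0 LL s1 by linarith
    hence big: "2 * c \<le> s 1 / 4 ^ K" by (simp add: field_simps)
    have res: "(kap \<alpha> * (s 1 / c) / 4 ^ K) ^ K \<le> real M"
      using comb_main[of \<alpha> c s M K] a cp nn win tF M1 big by blast
    have "C0 * L \<le> kap \<alpha> * (s 1 / c) / 4 ^ K"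
    proof -
      have "L * L / c \<le> s 1 / c" using big0 LL s1 cp by (intro divide_right_mono) auto
      moreover have "L * L / c = L / (2 * d)" unfolding c_def using Lp d by (simp add: field_simps)
      ultimately have "L / (2 * d) \<le> s 1 / c" by simp
      hence "kap \<alpha> * (L / (2 * d)) / 4 ^ K \<le> kap \<alpha> * (s 1 / c) / 4 ^ K"
        using kap_pos[OF a] by (intro divide_right_mono mult_left_mono) auto
      thus ?thesis unfolding C0_def by (simp add: field_simps)
    qed
    hence "(C0 * L) ^ K \<le> real M" using res C0 Lp by (meson less_imp_le mult_nonneg_nonneg order.trans power_mono)
    hence "C0 ^ K * L ^ K \<le> real n" using aM M_def by (simp add: power_mult_distrib)
    moreover have "L ^ K = real n powr (real K * \<theta>)" unfolding L_def using n0
      by (simp add: powr_realpow[symmetric] powr_powr mult.commute)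
    moreover have "real n powr 2 \<le> real n powr (real K * \<theta>)" unfolding \<theta>_def using Kz n1
      by (intro powr_mono) auto
    moreover have "real n powr 2 = real n * real n" using n0 by (simp add: powr_realpow[symmetric] power2_eq_square)
    ultimately have "C0 ^ K * (real n * real n) \<le> real n"
      using C0 by (metis mult_left_mono order.trans zero_le_power less_imp_le)
    hence "C0 ^ K * real n \<le> 1" using n0 by (simp add: algebra_simps mult_le_cancel_right1)
    hence "real n \<le> 1 / C0 ^ K" using C0 by (simp add: field_simps)
    thus False using nR(2) by (simp add: power_one_over)
  qed
  show "\<exists>\<theta>. 0 < \<theta> \<and> \<theta> < \<zeta> \<and>
           (\<exists>N::nat. \<forall>n>N. \<forall>\<omega> \<in> (realizations p :: (nat \<times> (real ^ 'd)) set set).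
              \<forall>\<pi>. minimizing_path \<alpha> n (omega_bar \<theta> n \<omega>) \<pi> \<longrightarrow>
                 (\<forall>i\<in>{1..n}. l1norm (\<pi> i - \<pi> (i - 1)) \<le> real n powr \<zeta>))"
    using main z unfolding \<theta>_def by (intro exI[of _ "\<zeta>/2"] conjI exI[of _ N]) auto
qed


end
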